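(* Let $n\ge 3$. An $n$-element subset $V\subseteq\mathbb R$ is optimal for $3$-term arithmetic progressions if and only if there is a similarity $f$ of $\mathbb R$ such that $f(V)=E\cup O$, where $E$ is a nonempty set of consecutive even integers, $O$ is a nonempty set of consecutive odd integers, and $E$ and $O$ are concentric if $n$ is odd, and nearly concentric if $n$ is even.
   Context: A $k$-term arithmetic progression is a set $\{a,a+d,\dots,a+(k-1)d\}\subseteq\mathbb R$ with $d>0$; $S_{\mathcal A_k}(V)$ denotes the number of $k$-term arithmetic progressions contained in $V$. An $n$-set $V\subseteq\mathbb R$ is optimal for $k$-term arithmetic progressions if $S_{\mathcal A_k}(V)$ equals the maximum of $S_{\mathcal A_k}(W)$ over all $n$-subsets $W\subseteq\mathbb R$, which equals $(n-r)(n+r-k+1)/(2k-2)$ with $r$ the remainder of $n$ modulo $k-1$. A similarity of $\mathbb R$ is a map $x\mapsto ax+b$ with $a\neq0$. A set of consecutive even (resp. odd) integers is a set $\{c,c+2,c+4,\dots,c+2m\}$ with $c$ even (resp. odd) and $m\ge0$. The barycenter of a finite arithmetic progression is the arithmetic mean of its elements; $E$ and $O$ are concentric if their barycenters are equal, and nearly concentric if their barycenters differ by exactly $1$. *)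

theory Defs
  imports Complex_Main
begin

definition ap :: "nat \<Rightarrow> real \<Rightarrow> real \<Rightarrow> real set" where
  "ap k a d = {a + real i * d | i. i < k}"

definition count_AP :: "nat \<Rightarrow> real set \<Rightarrow> nat" where
  "count_AP k V = card {P. \<exists>a d. d > 0 \<and> P = ap k a d \<and> P \<subseteq> V}"

definition optimal_AP :: "nat \<Rightarrow> real set \<Rightarrow> bool" where
  "optimal_AP k V \<longleftrightarrow> finite V \<and>
     (\<forall>W. finite W \<and> card W = card V \<longrightarrow> count_AP k W \<le> count_AP k V)"

definition similarity :: "(real \<Rightarrow> real) \<Rightarrow> bool" where
  "similarity f \<longleftrightarrow> (\<exists>a b. a \<noteq> 0 \<and> f = (\<lambda>x. a * x + b))"

definition consec_even :: "real set \<Rightarrow> bool" where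
  "consec_even E \<longleftrightarrow> (\<exists>(c::int) (m::nat). even c \<and>
      E = {real_of_int (c + 2 * int i) | i. i \<le> m})"

definition consec_odd :: "real set \<Rightarrow> bool" where
  "consec_odd D \<longleftrightarrow> (\<exists>(c::int) (m::nat). odd c \<and>
      D = {real_of_int (c + 2 * int i) | i. i \<le> m})"

definition barycenter :: "real set \<Rightarrow> real" where
  "barycenter A = (\<Sum>x\<in>A. x) / real (card A)"

end

theory Submission
  imports Defs
begin

lemma ap3: "ap 3 a d = {a, a+d, a+2*d}"
proof -
  have "{a + real i * d | i. i < 3} = {a, a+d, a+2*d}"
  proof
    show "{a + real i * d | i. i < 3} \<subseteq> {a, a+d, a+2*d}"
    proof
      fix x assume "x \<in> {a + real i * d | i. i < 3}"
      then obtain i where "i < (3::nat)" "x = a + real i * d" by auto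
      then have "i = 0 \<or> i = 1 \<or> i = 2" by auto
      then show "x \<in> {a, a+d, a+2*d}" using \<open>x = _\<close> by auto
    qed
    show "{a, a+d, a+2*d} \<subseteq> {a + real i * d | i. i < 3}"
    proof -
      have "a = a + real 0 * d \<and> (0::nat) < 3" "a + d = a + real 1 * d \<and> (1::nat) < 3" "a + 2*d = a + real 2 * d \<and> (2::nat) < 3" by auto
      then show ?thesis by blast
    qed
  qed
  then show ?thesis unfolding ap_def .
qed

definition cnt :: "real set \<Rightarrow> real \<Rightarrow> nat" where
  "cnt V v = card {u\<in>V. u<v \<and> 2*v-u\<in>V}"

lemma inj_trip:
  assumes "u < v" "u' < v'" "{u,v,2*v-u} = {u',v',2*v'-u'::real}"
  shows "u = u' \<and> v = v'"
proof -
  have a: "u \<in> {u',v',2*v'-u'}" "u' \<in> {u,v,2*v-u}" using assms(3) by auto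
  have "u \<ge> u'" using a(1) assms(2) by auto
  moreover have "u' \<ge> u" using a(2) assms(1) by auto
  ultimately have uu: "u = u'" by simp
  have b: "2*v-u \<in> {u',v',2*v'-u'}" "2*v'-u' \<in> {u,v,2*v-u}" using assms(3) by auto
  have "2*v-u \<le> 2*v'-u'" using b(1) assms(2) by auto
  moreover have "2*v'-u' \<le> 2*v-u" using b(2) assms(1) by auto
  ultimately show ?thesis using uu by simp
qed

lemma count_sum:
  assumes "finite V"
  shows "count_AP 3 V = (\<Sum>v\<in>V. cnt V v)"
proof -
  let ?S = "SIGMA v:V. {u\<in>V. u<v \<and> 2*v-u\<in>V}"
  let ?h = "\<lambda>(v,u). {u,v,2*v-u}"
  have eq: "{P. \<exists>a d. d > 0 \<and> P = ap 3 a d \<and> P \<subseteq> V} = ?h ` ?S"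
  proof
    show "{P. \<exists>a d. d > 0 \<and> P = ap 3 a d \<and> P \<subseteq> V} \<subseteq> ?h ` ?S"
    proof
      fix P assume "P \<in> {P. \<exists>a d. d > 0 \<and> P = ap 3 a d \<and> P \<subseteq> V}"
      then obtain a d where ad: "d > 0" "P = {a, a+d, a+2*d}" "P \<subseteq> V" by (auto simp: ap3)
      have "(a+d, a) \<in> ?S" using ad by auto
      moreover have "P = ?h (a+d, a)" using ad by auto
      ultimately show "P \<in> ?h ` ?S" by blast
    qed
    show "?h ` ?S \<subseteq> {P. \<exists>a d. d > 0 \<and> P = ap 3 a d \<and> P \<subseteq> V}"
    proof
      fix P assume "P \<in> ?h ` ?S"
      then obtain v u where vu: "v \<in> V" "u \<in> V" "u < v" "2*v-u \<in> V" "P = {u,v,2*v-u}" by auto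
      have "P = ap 3 u (v-u)" using vu by (auto simp: ap3)
      moreover have "P \<subseteq> V" using vu by auto
      moreover have "v - u > 0" using vu by auto
      ultimately show "P \<in> {P. \<exists>a d. d > 0 \<and> P = ap 3 a d \<and> P \<subseteq> V}" by blast
    qed
  qed
  have inj: "inj_on ?h ?S"
    by (rule inj_onI) (use inj_trip in auto)
  have "count_AP 3 V = card ?S" unfolding count_AP_def eq using card_image[OF inj] by simp
  also have "\<dots> = (\<Sum>v\<in>V. card {u\<in>V. u<v \<and> 2*v-u\<in>V})"
    using assms by (subst card_SigmaI) auto
  finally show ?thesis unfolding cnt_def .
qed

definition Lv :: "real set \<Rightarrow> real \<Rightarrow> nat" where "Lv V v = card {u\<in>V. u<v}"
definition Rv :: "real set \<Rightarrow> real \<Rightarrow> nat" where "Rv V v = card {u\<in>V. v<u}"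
definition lowR :: "real set \<Rightarrow> real \<Rightarrow> bool" where "lowR V v \<longleftrightarrow> (\<forall>u\<in>V. u<v \<longrightarrow> 2*v-u \<in> V)"
definition upR :: "real set \<Rightarrow> real \<Rightarrow> bool" where "upR V v \<longleftrightarrow> (\<forall>u\<in>V. v<u \<longrightarrow> 2*v-u \<in> V)"
definition good :: "real set \<Rightarrow> bool" where "good V \<longleftrightarrow> (\<forall>v\<in>V. lowR V v \<or> upR V v)"
definition Smin :: "nat \<Rightarrow> nat" where "Smin n = (\<Sum>j<n. min j (n-1-j))"

lemma Lv_mono:
  assumes "finite V" "u \<in> V" "u < v"
  shows "Lv V u < Lv V v"
  unfolding Lv_def
  by (rule psubset_card_mono) (use assms in auto)

lemma Lv_less:
  assumes "finite V" "v \<in> V"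
  shows "Lv V v < card V"
  unfolding Lv_def
  by (rule psubset_card_mono) (use assms in auto)

lemma Lv_less_iff:
  assumes "finite V" "u \<in> V" "v \<in> V"
  shows "Lv V u < Lv V v \<longleftrightarrow> u < v"
proof
  assume h: "Lv V u < Lv V v"
  show "u < v"
  proof (rule ccontr)
    assume "\<not> u < v"
    then have "v < u \<or> v = u" by auto
    then show False using Lv_mono[OF assms(1,3), of u] h by auto
  qed
qed (use Lv_mono[OF assms(1,2)] in auto)

lemma Lv_inj: "finite V \<Longrightarrow> inj_on (Lv V) V"
proof (rule inj_onI)
  fix x y assume "finite V" "x \<in> V" "y \<in> V" "Lv V x = Lv V y"
  then show "x = y" using Lv_less_iff[of V x y] Lv_less_iff[of V y x] by (auto simp: neq_iff)
qed

lemma Lv_bij: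
  assumes "finite V"
  shows "bij_betw (Lv V) V {..<card V}"
proof -
  have "Lv V ` V \<subseteq> {..<card V}" using Lv_less[OF assms] by auto
  moreover have "card (Lv V ` V) = card {..<card V}" using card_image[OF Lv_inj[OF assms]] by simp
  ultimately have "Lv V ` V = {..<card V}" by (simp add: card_subset_eq)
  then show ?thesis using Lv_inj[OF assms] by (simp add: bij_betw_def)
qed

lemma rank_exists:
  assumes "finite V" "j < card V"
  obtains v where "v \<in> V" "Lv V v = j"
  using Lv_bij[OF assms(1)] assms(2) unfolding bij_betw_def by (metis imageE lessThan_iff)

lemma Rv_eq:
  assumes "finite V" "v \<in> V"
  shows "Rv V v = card V - 1 - Lv V v"
proof -
  have "{u\<in>V. v<u} = V - ({u\<in>V. u<v} \<union> {v})" by auto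
  moreover have "card ({u\<in>V. u<v} \<union> {v}) = Lv V v + 1" unfolding Lv_def
    using assms by (subst card_Un_disjoint) auto
  moreover have "{u\<in>V. u<v} \<union> {v} \<subseteq> V" using assms by auto
  ultimately have "Rv V v = card V - (Lv V v + 1)" unfolding Rv_def using assms
    by (simp add: card_Diff_subset finite_subset)
  then show ?thesis by simp
qed

lemma cnt_le_L: "finite V \<Longrightarrow> cnt V v \<le> Lv V v"
  unfolding cnt_def Lv_def by (rule card_mono) (simp, blast)

lemma cnt_up: "cnt V v = card {w\<in>V. v<w \<and> 2*v-w\<in>V}"
proof -
  let ?A = "{u\<in>V. u<v \<and> 2*v-u\<in>V}"
  let ?B = "{w\<in>V. v<w \<and> 2*v-w\<in>V}"
  have im: "(\<lambda>u. 2*v-u) ` ?A = ?B"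
  proof
    show "(\<lambda>u. 2*v-u) ` ?A \<subseteq> ?B" by force
    show "?B \<subseteq> (\<lambda>u. 2*v-u) ` ?A"
    proof
      fix w assume "w \<in> ?B"
      then have "2*v-w \<in> ?A" "w = 2*v-(2*v-w)" by simp_all
      then show "w \<in> (\<lambda>u. 2*v-u) ` ?A" by blast
    qed
  qed
  have inj: "inj_on (\<lambda>u. 2*v-u) ?A" by (rule inj_onI) simp
  have "card ?B = card ?A" using card_image[OF inj] unfolding im .
  then show ?thesis unfolding cnt_def by simp
qed

lemma cnt_le_R: "finite V \<Longrightarrow> cnt V v \<le> Rv V v"
  unfolding cnt_up Rv_def by (rule card_mono) (simp, blast)

lemma cnt_min_iff:
  assumes "finite V"
  shows "cnt V v = min (Lv V v) (Rv V v) \<longleftrightarrow> lowR V v \<or> upR V v"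
proof
  assume h: "cnt V v = min (Lv V v) (Rv V v)"
  show "lowR V v \<or> upR V v"
  proof (cases "Lv V v \<le> Rv V v")
    case True
    then have "card {u\<in>V. u<v \<and> 2*v-u\<in>V} = card {u\<in>V. u<v}" using h unfolding cnt_def Lv_def by simp
    then have "{u\<in>V. u<v \<and> 2*v-u\<in>V} = {u\<in>V. u<v}" using assms
      by (intro card_subset_eq) auto
    then have "lowR V v" unfolding lowR_def by blast
    then show ?thesis ..
  next
    case False
    then have "card {w\<in>V. v<w \<and> 2*v-w\<in>V} = card {u\<in>V. v<u}" using h cnt_up unfolding Rv_def by simp
    then have "{w\<in>V. v<w \<and> 2*v-w\<in>V} = {u\<in>V. v<u}" using assms
      by (intro card_subset_eq) auto
    then have "upR V v" unfolding upR_def by blast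
    then show ?thesis ..
  qed
next
  assume "lowR V v \<or> upR V v"
  then show "cnt V v = min (Lv V v) (Rv V v)"
  proof
    assume "lowR V v"
    then have "{u\<in>V. u<v \<and> 2*v-u\<in>V} = {u\<in>V. u<v}" unfolding lowR_def by blast
    then have "cnt V v = Lv V v" unfolding cnt_def Lv_def by simp
    then show ?thesis using cnt_le_R[OF assms, of v] by simp
  next
    assume "upR V v"
    then have "{w\<in>V. v<w \<and> 2*v-w\<in>V} = {u\<in>V. v<u}" unfolding upR_def by blast
    then have "cnt V v = Rv V v" unfolding cnt_up Rv_def by simp
    then show ?thesis using cnt_le_L[OF assms, of v] by simp
  qed
qed

lemma sum_min:
  assumes "finite V"
  shows "(\<Sum>v\<in>V. min (Lv V v) (Rv V v)) = Smin (card V)"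
proof -
  have "(\<Sum>v\<in>V. min (Lv V v) (Rv V v)) = (\<Sum>v\<in>V. (\<lambda>j. min j (card V - 1 - j)) (Lv V v))"
    using Rv_eq[OF assms] by (intro sum.cong) auto
  also have "\<dots> = (\<Sum>j<card V. min j (card V - 1 - j))"
    using sum.reindex_bij_betw[OF Lv_bij[OF assms]] .
  finally show ?thesis unfolding Smin_def .
qed

lemma count_le: "finite V \<Longrightarrow> count_AP 3 V \<le> Smin (card V)"
  unfolding count_sum sum_min[symmetric]
  by (rule sum_mono) (simp add: cnt_le_L cnt_le_R)

lemma count_eq_iff:
  assumes "finite V"
  shows "count_AP 3 V = Smin (card V) \<longleftrightarrow> good V"
proof -
  have le: "\<And>v. v\<in>V \<Longrightarrow> cnt V v \<le> min (Lv V v) (Rv V v)" using assms by (simp add: cnt_le_L cnt_le_R)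
  have "count_AP 3 V = Smin (card V) \<longleftrightarrow> (\<Sum>v\<in>V. cnt V v) = (\<Sum>v\<in>V. min (Lv V v) (Rv V v))"
    using assms by (simp add: count_sum sum_min)
  also have "\<dots> \<longleftrightarrow> (\<forall>v\<in>V. cnt V v = min (Lv V v) (Rv V v))"
  proof
    assume e: "(\<Sum>v\<in>V. cnt V v) = (\<Sum>v\<in>V. min (Lv V v) (Rv V v))"
    show "\<forall>v\<in>V. cnt V v = min (Lv V v) (Rv V v)"
    proof (rule ccontr)
      assume "\<not> ?thesis"
      then obtain v where "v \<in> V" "cnt V v < min (Lv V v) (Rv V v)" using le by (meson le_neq_implies_less)
      then have "(\<Sum>v\<in>V. cnt V v) < (\<Sum>v\<in>V. min (Lv V v) (Rv V v))"
        using assms le by (intro sum_strict_mono_ex1) auto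
      then show False using e by simp
    qed
  qed simp
  finally show ?thesis unfolding good_def using cnt_min_iff[OF assms] by simp
qed

lemma good_range: "good (real ` {0..<n})"
  unfolding good_def
proof
  fix v assume "v \<in> real ` {0..<n}"
  then obtain j where j: "j < n" "v = real j" by auto
  show "lowR (real ` {0..<n}) v \<or> upR (real ` {0..<n}) v"
  proof (cases "2*j \<le> n - 1")
    case True
    have "lowR (real ` {0..<n}) v" unfolding lowR_def
    proof (intro ballI impI)
      fix u assume "u \<in> real ` {0..<n}" "u < v"
      then obtain i where i: "u = real i" "i < j" using j by auto
      have "2*v-u = real (2*j-i)" using i j by (simp add: of_nat_diff)
      moreover have "2*j-i < n" using True i j by linarith
      ultimately show "2*v-u \<in> real ` {0..<n}" by auto
    qed
    then show ?thesis ..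
  next
    case False
    have "upR (real ` {0..<n}) v" unfolding upR_def
    proof (intro ballI impI)
      fix u assume "u \<in> real ` {0..<n}" "v < u"
      then obtain i where i: "u = real i" "j < i" "i < n" using j by auto
      have "2*v-u = real (2*j-i)" using i j False by (simp add: of_nat_diff)
      moreover have "2*j-i < n" using False i j by linarith
      ultimately show "2*v-u \<in> real ` {0..<n}" by auto
    qed
    then show ?thesis ..
  qed
qed

lemma optimal_iff_good:
  assumes "finite V"
  shows "optimal_AP 3 V \<longleftrightarrow> good V"
proof -
  let ?W = "real ` {0..<card V}"
  have W: "finite ?W" "card ?W = card V" by (auto simp: card_image)
  have cW: "count_AP 3 ?W = Smin (card V)" using count_eq_iff[OF W(1)] good_range W(2) by simp
  show ?thesis
  proof
    assume "optimal_AP 3 V"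
    then have "count_AP 3 ?W \<le> count_AP 3 V" using W unfolding optimal_AP_def by auto
    then have "count_AP 3 V = Smin (card V)" using cW count_le[OF assms] by simp
    then show "good V" using count_eq_iff[OF assms] by simp
  next
    assume "good V"
    then have "count_AP 3 V = Smin (card V)" using count_eq_iff[OF assms] by simp
    then show "optimal_AP 3 V" unfolding optimal_AP_def using assms count_le by (metis (no_types))
  qed
qed

lemma good_affine:
  assumes g: "good V" and a: "a \<noteq> 0"
  shows "good ((\<lambda>x. a*x+b) ` V)"
  unfolding good_def
proof
  fix y assume "y \<in> (\<lambda>x. a*x+b) ` V"
  then obtain v where v: "v \<in> V" "y = a*v+b" by auto
  have ref: "2*(a*v+b) - (a*u+b) = a*(2*v-u)+b" for u by (simp add: algebra_simps)
  have c: "lowR V v \<or> upR V v" using g v unfolding good_def by auto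
  show "lowR ((\<lambda>x. a*x+b) ` V) y \<or> upR ((\<lambda>x. a*x+b) ` V) y"
  proof (cases "a > 0")
    case True
    have lt: "a*u+b < a*v+b \<longleftrightarrow> u < v" for u using True by simp
    have gt: "a*v+b < a*u+b \<longleftrightarrow> v < u" for u using True by simp
    from c show ?thesis
    proof
      assume "lowR V v"
      then have "lowR ((\<lambda>x. a*x+b) ` V) y" unfolding lowR_def v(2)
        using lt ref by auto
      then show ?thesis ..
    next
      assume "upR V v"
      then have "upR ((\<lambda>x. a*x+b) ` V) y" unfolding upR_def v(2)
        using gt ref by auto
      then show ?thesis ..
    qed
  next
    case False
    then have an: "a < 0" using a by simp
    have lt: "a*u+b < a*v+b \<longleftrightarrow> v < u" for u using an by simp
    have gt: "a*v+b < a*u+b \<longleftrightarrow> u < v" for u using an by simp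
    from c show ?thesis
    proof
      assume "lowR V v"
      then have "upR ((\<lambda>x. a*x+b) ` V) y" unfolding lowR_def upR_def v(2)
        using gt ref by auto
      then show ?thesis ..
    next
      assume "upR V v"
      then have "lowR ((\<lambda>x. a*x+b) ` V) y" unfolding upR_def lowR_def v(2)
        using lt ref by auto
      then show ?thesis ..
    qed
  qed
qed

lemma good_sim_iff:
  assumes "similarity f"
  shows "good (f ` V) \<longleftrightarrow> good V"
proof -
  obtain a b where ab: "a \<noteq> 0" "f = (\<lambda>x. a*x+b)" using assms unfolding similarity_def by auto
  have inv: "(\<lambda>x. (1/a)*x + (-b/a)) ` (f ` V) = V"
    unfolding ab image_image using ab(1) by (simp add: field_simps)
  show ?thesis
  proof
    assume "good (f ` V)"
    then have "good ((\<lambda>x. (1/a)*x + (-b/a)) ` (f ` V))" using ab(1) by (intro good_affine) auto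
    then show "good V" using inv by simp
  qed (use good_affine ab in auto)
qed

definition cs :: "int \<Rightarrow> nat \<Rightarrow> real set" where
  "cs c m = {real_of_int (c + 2 * int i) | i. i \<le> m}"

lemma mem_cs: "x \<in> cs c m \<longleftrightarrow> (\<exists>j. x = of_int j \<and> c \<le> j \<and> j \<le> c + 2*int m \<and> even (j - c))"
proof
  assume "x \<in> cs c m"
  then obtain i where "i \<le> m" "x = of_int (c + 2*int i)" unfolding cs_def by auto
  then show "\<exists>j. x = of_int j \<and> c \<le> j \<and> j \<le> c + 2*int m \<and> even (j - c)" by (intro exI[of _ "c + 2*int i"]) auto
next
  assume "\<exists>j. x = of_int j \<and> c \<le> j \<and> j \<le> c + 2*int m \<and> even (j - c)"
  then obtain j where j: "x = of_int j" "c \<le> j" "j \<le> c + 2*int m" "even (j - c)" by auto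
  from j(4) obtain k where k: "j - c = 2*k" by (rule evenE)
  have "k \<ge> 0" using k j by auto
  then have "j = c + 2*int (nat k)" "nat k \<le> m" using k j by auto
  then have "x = real_of_int (c + 2 * int (nat k)) \<and> nat k \<le> m" using j(1) by simp
  then show "x \<in> cs c m" unfolding cs_def by blast
qed

lemma cs_img: "cs c m = (\<lambda>i. real_of_int (c + 2 * int i)) ` {..m}"
  unfolding cs_def by auto

lemma cs_ne: "cs c m \<noteq> {}"
  unfolding cs_def by auto

lemma cs_fin: "finite (cs c m)"
proof -
  have "cs c m = (\<lambda>i. real_of_int (c + 2 * int i)) ` {..m}" unfolding cs_def by auto
  then show ?thesis by simp
qed

lemma cs_Suc: "cs c (Suc m) = insert (of_int (c + 2*int (Suc m))) (cs c m)"
  unfolding cs_img atMost_Suc image_insert ..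

lemma bary_cs: "barycenter (cs c m) = of_int c + real m"
proof -
  have eq: "cs c m = (\<lambda>i. real_of_int (c + 2 * int i)) ` {..m}" unfolding cs_def by auto
  have inj: "inj_on (\<lambda>i. real_of_int (c + 2 * int i)) {..m}" by (rule inj_onI) auto
  have card: "card (cs c m) = Suc m" unfolding eq using card_image[OF inj] by simp
  have s2: "(\<Sum>i\<le>m. real i) = real m * (real m + 1) / 2"
    by (induction m) (auto simp: field_simps)
  have "(\<Sum>x\<in>cs c m. x) = (\<Sum>i\<le>m. real_of_int (c + 2 * int i))"
    unfolding eq by (rule sum.reindex[OF inj, unfolded comp_def])
  also have "\<dots> = (\<Sum>i\<le>m. of_int c + 2 * real i)" by simp
  also have "\<dots> = real (Suc m) * of_int c + 2 * (\<Sum>i\<le>m. real i)"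
    by (simp add: sum.distrib sum_distrib_left)
  also have "\<dots> = real (Suc m) * (of_int c + real m)" unfolding s2 by (simp add: field_simps)
  finally show ?thesis unfolding barycenter_def card by simp
qed

lemma refl_low:
  assumes "u \<in> cs C M" "u < of_int jv" "of_int jv \<le> of_int C + real M"
  shows "2 * of_int jv - u \<in> cs C M"
proof -
  obtain i where i: "u = of_int i" "C \<le> i" "i \<le> C + 2*int M" "even (i - C)" using assms(1) mem_cs by auto
  have a: "i < jv" "jv \<le> C + int M" using assms(2,3) i(1) by linarith+
  have "2*jv - i - C = 2*(jv - i) + (i - C)" by simp
  then have "even (2*jv - i - C)" using i(4) by presburger
  moreover have "2 * of_int jv - u = of_int (2*jv - i)" using i(1) by simp
  ultimately show ?thesis unfolding mem_cs using a i by (intro exI[of _ "2*jv-i"]) (auto simp: algebra_simps)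
qed

lemma refl_up:
  assumes "u \<in> cs C M" "of_int jv < u" "of_int C + real M \<le> of_int jv"
  shows "2 * of_int jv - u \<in> cs C M"
proof -
  obtain i where i: "u = of_int i" "C \<le> i" "i \<le> C + 2*int M" "even (i - C)" using assms(1) mem_cs by auto
  have a: "jv < i" "C + int M \<le> jv" using assms(2,3) i(1) by linarith+
  have "2*jv - i - C = 2*(jv - i) + (i - C)" by simp
  then have "even (2*jv - i - C)" using i(4) by presburger
  moreover have "2 * of_int jv - u = of_int (2*jv - i)" using i(1) by simp
  ultimately show ?thesis unfolding mem_cs using a i by (intro exI[of _ "2*jv-i"]) (auto simp: algebra_simps)
qed

lemma good_struct:
  assumes "\<bar>(of_int c + real m) - (of_int c' + real m')\<bar> \<le> (1::real)"
  shows "good (cs c m \<union> cs c' m')"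
  unfolding good_def
proof
  fix v assume v: "v \<in> cs c m \<union> cs c' m'"
  then obtain jv where jv: "v = of_int jv" using mem_cs by auto
  have ints: "\<bar>(c + int m) - (c' + int m')\<bar> \<le> 1" using assms by linarith
  have "(jv \<le> c + int m \<and> jv \<le> c' + int m') \<or> (jv \<ge> c + int m \<and> jv \<ge> c' + int m')"
    using ints by linarith
  then show "lowR (cs c m \<union> cs c' m') v \<or> upR (cs c m \<union> cs c' m') v"
  proof
    assume h: "jv \<le> c + int m \<and> jv \<le> c' + int m'"
    have h1: "of_int jv \<le> of_int c + real m" "of_int jv \<le> of_int c' + real m'"
      using h by linarith+
    have "lowR (cs c m \<union> cs c' m') v" unfolding lowR_def
    proof (intro ballI impI)
      fix u assume "u \<in> cs c m \<union> cs c' m'" "u < v"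
      then show "2*v-u \<in> cs c m \<union> cs c' m'"
        using refl_low[of u c m jv] refl_low[of u c' m' jv] h1 jv by blast
    qed
    then show ?thesis ..
  next
    assume h: "jv \<ge> c + int m \<and> jv \<ge> c' + int m'"
    have h1: "of_int c + real m \<le> of_int jv" "of_int c' + real m' \<le> of_int jv"
      using h by linarith+
    have "upR (cs c m \<union> cs c' m') v" unfolding upR_def
    proof (intro ballI impI)
      fix u assume "u \<in> cs c m \<union> cs c' m'" "v < u"
      then show "2*v-u \<in> cs c m \<union> cs c' m'"
        using refl_up[of u c m jv] refl_up[of u c' m' jv] h1 jv by blast
    qed
    then show ?thesis ..
  qed
qed

lemma shapeK:
  fixes K :: "int set"
  assumes fin: "finite K" and sym: "\<And>j. j \<in> K \<Longrightarrow> -j \<in> K" and z: "0 \<in> K" and o: "1 \<in> K"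
    and dn: "\<And>j. j \<in> K \<Longrightarrow> j > 1 \<Longrightarrow> j - 2 \<in> K"
  shows "\<exists>p q::nat. K = {j. even j \<and> \<bar>j\<bar> \<le> 2*int p} \<union> {j. odd j \<and> \<bar>j\<bar> \<le> 2*int q+1}"
proof -
  have down: "\<forall>j\<in>K. 0 \<le> j \<and> j \<le> int N \<longrightarrow> (\<forall>i. 0 \<le> i \<and> i \<le> j \<and> even (j - i) \<longrightarrow> i \<in> K)" for N
  proof (induction N)
    case 0
    show ?case
    proof (intro ballI impI allI)
      fix j i assume "j \<in> K" "0 \<le> j \<and> j \<le> int 0" "0 \<le> i \<and> i \<le> j \<and> even (j - i)"
      then have "i = j" by simp
      then show "i \<in> K" using \<open>j \<in> K\<close> by simp
    qed
  next
    case (Suc N)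
    show ?case
    proof (intro ballI impI allI)
      fix j i assume j: "j \<in> K" "0 \<le> j \<and> j \<le> int (Suc N)" and i: "0 \<le> i \<and> i \<le> j \<and> even (j - i)"
      show "i \<in> K"
      proof (cases "i = j")
        case True then show ?thesis using j by simp
      next
        case False
        then have "i \<le> j - 2" using i by presburger
        then have "j > 1" using i by simp
        then have "j - 2 \<in> K" using dn j by simp
        moreover have "0 \<le> j - 2 \<and> j - 2 \<le> int N" using \<open>i \<le> j - 2\<close> i j by simp
        moreover have "0 \<le> i \<and> i \<le> j - 2 \<and> even (j - 2 - i)" using \<open>i \<le> j - 2\<close> i by simp
        ultimately show ?thesis using Suc.IH by blast
      qed
    qed
  qed
  have down': "\<And>j i. j \<in> K \<Longrightarrow> 0 \<le> i \<Longrightarrow> i \<le> j \<Longrightarrow> even (j - i) \<Longrightarrow> i \<in> K"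
  proof -
    fix j i assume a: "j \<in> K" "0 \<le> i" "i \<le> j" "even (j - i)"
    have "0 \<le> j \<and> j \<le> int (nat j)" using a by simp
    then show "i \<in> K" using down[of "nat j"] a by blast
  qed
  define KE where "KE = {j\<in>K. even j}"
  define KO where "KO = {j\<in>K. odd j}"
  have fE: "finite KE" "KE \<noteq> {}" using fin z unfolding KE_def by auto
  have fO: "finite KO" "KO \<noteq> {}" using fin o unfolding KO_def by auto
  define Me where "Me = Max KE"
  define Mo where "Mo = Max KO"
  have MeK: "Me \<in> K" "even Me" using Max_in[OF fE] unfolding Me_def KE_def by auto
  have MoK: "Mo \<in> K" "odd Mo" using Max_in[OF fO] unfolding Mo_def KO_def by auto
  have Me_ge: "\<And>j. j \<in> K \<Longrightarrow> even j \<Longrightarrow> j \<le> Me" using Max_ge[OF fE(1)] unfolding Me_def KE_def by auto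
  have Mo_ge: "\<And>j. j \<in> K \<Longrightarrow> odd j \<Longrightarrow> j \<le> Mo" using Max_ge[OF fO(1)] unfolding Mo_def KO_def by auto
  have Me0: "Me \<ge> 0" using Me_ge z by auto
  have Mo1: "Mo \<ge> 1" using Mo_ge o by auto
  obtain p where p: "Me = 2 * int p"
  proof -
    obtain r where r: "Me = 2*r" using MeK(2) by (rule evenE)
    have "r \<ge> 0" using r Me0 by simp
    then show ?thesis using r that[of "nat r"] by simp
  qed
  obtain q where q: "Mo = 2 * int q + 1"
  proof -
    obtain r where r: "Mo = 2*r + 1" using MoK(2) by (rule oddE)
    have "r \<ge> 0" using r Mo1 by simp
    then show ?thesis using r that[of "nat r"] by simp
  qed
  have "K = {j. even j \<and> \<bar>j\<bar> \<le> 2*int p} \<union> {j. odd j \<and> \<bar>j\<bar> \<le> 2*int q+1}"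
  proof
    show "K \<subseteq> {j. even j \<and> \<bar>j\<bar> \<le> 2*int p} \<union> {j. odd j \<and> \<bar>j\<bar> \<le> 2*int q+1}"
    proof
      fix j assume j: "j \<in> K"
      have "-j \<in> K" using sym j .
      show "j \<in> {j. even j \<and> \<bar>j\<bar> \<le> 2*int p} \<union> {j. odd j \<and> \<bar>j\<bar> \<le> 2*int q+1}"
      proof (cases "even j")
        case True
        then have "j \<le> Me" "-j \<le> Me" using Me_ge j \<open>-j\<in>K\<close> by auto
        then show ?thesis using True p by auto
      next
        case False
        then have "j \<le> Mo" "-j \<le> Mo" using Mo_ge j \<open>-j\<in>K\<close> by auto
        then show ?thesis using False q by auto
      qed
    qed
    show "{j. even j \<and> \<bar>j\<bar> \<le> 2*int p} \<union> {j. odd j \<and> \<bar>j\<bar> \<le> 2*int q+1} \<subseteq> K"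
    proof
      fix j assume "j \<in> {j. even j \<and> \<bar>j\<bar> \<le> 2*int p} \<union> {j. odd j \<and> \<bar>j\<bar> \<le> 2*int q+1}"
      then have "\<bar>j\<bar> \<in> K"
      proof
        assume "j \<in> {j. even j \<and> \<bar>j\<bar> \<le> 2*int p}"
        then show "\<bar>j\<bar> \<in> K" using down'[OF MeK(1), of "\<bar>j\<bar>"] p by auto
      next
        assume "j \<in> {j. odd j \<and> \<bar>j\<bar> \<le> 2*int q+1}"
        then show "\<bar>j\<bar> \<in> K" using down'[OF MoK(1), of "\<bar>j\<bar>"] q by auto
      qed
      then show "j \<in> K" using sym[of "\<bar>j\<bar>"] by (cases "j \<ge> 0") auto
    qed
  qed
  then show ?thesis by blast
qed

lemma mem_csE: "x \<in> cs (-(2*int p)) (2*p) \<longleftrightarrow> (\<exists>j. x = of_int j \<and> even j \<and> \<bar>j\<bar> \<le> 2*int p)"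
  unfolding mem_cs by (auto simp: abs_le_iff)

lemma mem_csO: "x \<in> cs (-(2*int q+1)) (2*q+1) \<longleftrightarrow> (\<exists>j. x = of_int j \<and> odd j \<and> \<bar>j\<bar> \<le> 2*int q+1)"
proof -
  have "even (j - - (2 * int q + 1)) \<longleftrightarrow> odd j" for j by presburger
  then show ?thesis unfolding mem_cs by (auto simp: abs_le_iff)
qed

lemma shapeR:
  assumes fin: "finite V" and cV: "c \<in> V" and s: "s > 0" and csV: "c + s \<in> V"
    and sym: "\<And>x. x \<in> V \<Longrightarrow> 2*c - x \<in> V"
    and gap: "\<And>x. x \<in> V \<Longrightarrow> \<not> (c < x \<and> x < c + s)"
    and A: "\<And>x. x \<in> V \<Longrightarrow> x > c + s \<Longrightarrow> 2*(c+s) - x \<in> V"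
  shows "\<exists>p q. (\<lambda>x. (x-c)/s) ` V = cs (-(2*int p)) (2*p) \<union> cs (-(2*int q+1)) (2*q+1)"
proof -
  define g where "g = (\<lambda>x. (x-c)/s)"
  define U where "U = g ` V"
  have finU: "finite U" unfolding U_def using fin by simp
  have Usym: "-y \<in> U" if yU: "y \<in> U" for y
  proof -
    obtain x where x: "x \<in> V" "y = g x" using yU unfolding U_def by auto
    have "g (2*c - x) = -y" unfolding x g_def using s by (simp add: field_simps)
    then show ?thesis unfolding U_def using sym[OF x(1)] by (metis image_eqI)
  qed
  have U0: "0 \<in> U" unfolding U_def g_def using cV by force
  have U1: "1 \<in> U"
  proof -
    have "g (c+s) = 1" unfolding g_def using s by simp
    then show ?thesis unfolding U_def using csV by (metis image_eqI)
  qed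
  have Ugap: "\<not> (0 < y \<and> y < 1)" if yU: "y \<in> U" for y
  proof
    assume h: "0 < y \<and> y < 1"
    obtain x where x: "x \<in> V" "y = g x" using yU unfolding U_def by auto
    have "c < x \<and> x < c + s" using h s unfolding x g_def by (simp add: field_simps)
    then show False using gap[OF x(1)] by simp
  qed
  have UA: "2 - y \<in> U" if yU: "y \<in> U" and y1: "y > 1" for y
  proof -
    obtain x where x: "x \<in> V" "y = g x" using yU unfolding U_def by auto
    have "x > c + s" using y1 s unfolding x g_def by (simp add: field_simps)
    moreover have "g (2*(c+s) - x) = 2 - y" unfolding x g_def using s by (simp add: field_simps)
    ultimately show ?thesis unfolding U_def using A[OF x(1)] by (metis image_eqI)
  qed
  have Udn: "y - 2 \<in> U \<and> y - 2 \<ge> 0" if yU: "y \<in> U" and y1: "y > 1" for y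
  proof -
    have a: "2 - y \<in> U" using UA yU y1 by simp
    have "2 - y < 1" using y1 by simp
    then have "\<not> (2 - y > 0)" using Ugap[OF a] by auto
    then show ?thesis using Usym[OF a] by simp
  qed
  have Uint: "\<forall>y\<in>U. \<bar>y\<bar> \<le> real N \<longrightarrow> (\<exists>j::int. y = of_int j)" for N
  proof (induction N)
    case 0
    then show ?case by auto
  next
    case (Suc N)
    show ?case
    proof (intro ballI impI)
      fix y assume y: "y \<in> U" "\<bar>y\<bar> \<le> real (Suc N)"
      have ay: "\<bar>y\<bar> \<in> U" using y Usym by (cases "y \<ge> 0") auto
      have "\<exists>j::int. \<bar>y\<bar> = of_int j"
      proof (cases "\<bar>y\<bar> > 1")
        case True
        then have "\<bar>y\<bar> - 2 \<in> U" "\<bar>y\<bar> - 2 \<ge> 0" using Udn[OF ay] by auto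
        moreover have "\<bar>\<bar>y\<bar> - 2\<bar> \<le> real N" using y True Udn[OF ay] by (simp add: abs_le_iff, linarith)
        ultimately obtain j where "\<bar>y\<bar> - 2 = of_int j" using Suc.IH by blast
        then have "\<bar>y\<bar> = of_int (j + 2)" by simp
        then show ?thesis by blast
      next
        case False
        then have "\<bar>y\<bar> = 0 \<or> \<bar>y\<bar> = 1" using Ugap[OF ay] by auto
        then show ?thesis by (metis of_int_0 of_int_1)
      qed
      then obtain j where j: "\<bar>y\<bar> = of_int j" by blast
      show "\<exists>j::int. y = of_int j"
      proof (cases "y \<ge> 0")
        case True then show ?thesis using j by auto
      next
        case False then have "y = of_int (-j)" using j by simp
        then show ?thesis by blast
      qed
    qed
  qed
  have Uint': "\<exists>j::int. y = of_int j" if yU: "y \<in> U" for y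
    using Uint[of "nat \<lceil>\<bar>y\<bar>\<rceil>"] that by (meson real_nat_ceiling_ge)
  define K where "K = {j::int. real_of_int j \<in> U}"
  have UK: "U = real_of_int ` K" unfolding K_def using Uint' by auto
  have finK: "finite K"
  proof -
    have "inj_on (real_of_int) K" by (rule inj_onI) simp
    then show ?thesis using finU UK by (simp add: finite_image_iff)
  qed
  obtain p q where pq: "K = {j. even j \<and> \<bar>j\<bar> \<le> 2*int p} \<union> {j. odd j \<and> \<bar>j\<bar> \<le> 2*int q+1}"
  proof -
    have "\<exists>p q::nat. K = {j. even j \<and> \<bar>j\<bar> \<le> 2*int p} \<union> {j. odd j \<and> \<bar>j\<bar> \<le> 2*int q+1}"
    proof (rule shapeK[OF finK])
      show "-j \<in> K" if "j \<in> K" for j using Usym that unfolding K_def by auto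
      show "0 \<in> K" using U0 unfolding K_def by simp
      show "1 \<in> K" using U1 unfolding K_def by simp
      show "j - 2 \<in> K" if "j \<in> K" "j > 1" for j
      proof -
        have "real_of_int j > 1" using that(2) by simp
        then have "real_of_int j - 2 \<in> U" using Udn that(1) unfolding K_def by auto
        then show ?thesis unfolding K_def by simp
      qed
    qed
    then show ?thesis using that by blast
  qed
  have "U = cs (-(2*int p)) (2*p) \<union> cs (-(2*int q+1)) (2*q+1)"
  proof
    show "U \<subseteq> cs (-(2*int p)) (2*p) \<union> cs (-(2*int q+1)) (2*q+1)"
    proof
      fix y assume "y \<in> U"
      then obtain j where j: "j \<in> K" "y = of_int j" unfolding UK by auto
      then show "y \<in> cs (-(2*int p)) (2*p) \<union> cs (-(2*int q+1)) (2*q+1)"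
        unfolding Un_iff mem_csE mem_csO using pq by blast
    qed
    show "cs (-(2*int p)) (2*p) \<union> cs (-(2*int q+1)) (2*q+1) \<subseteq> U"
    proof
      fix y assume "y \<in> cs (-(2*int p)) (2*p) \<union> cs (-(2*int q+1)) (2*q+1)"
      then obtain j where "y = of_int j" "j \<in> K"
        unfolding Un_iff mem_csE mem_csO using pq by blast
      then show "y \<in> U" unfolding UK by simp
    qed
  qed
  then show ?thesis unfolding U_def g_def by blast
qed

lemma lowR_cnt: "lowR V v \<Longrightarrow> cnt V v = Lv V v"
proof -
  assume "lowR V v"
  then have "{u\<in>V. u<v \<and> 2*v-u\<in>V} = {u\<in>V. u<v}" unfolding lowR_def by blast
  then show ?thesis unfolding cnt_def Lv_def by simp
qed

lemma upR_cnt: "upR V v \<Longrightarrow> cnt V v = Rv V v"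
proof -
  assume "upR V v"
  then have "{w\<in>V. v<w \<and> 2*v-w\<in>V} = {u\<in>V. v<u}" unfolding upR_def by blast
  then show ?thesis unfolding cnt_up Rv_def by simp
qed

lemma lowR_le: "finite V \<Longrightarrow> lowR V v \<Longrightarrow> Lv V v \<le> Rv V v"
  using lowR_cnt cnt_le_R by metis

lemma upR_le: "finite V \<Longrightarrow> upR V v \<Longrightarrow> Rv V v \<le> Lv V v"
  using upR_cnt cnt_le_L by metis

lemma lowR_upR:
  assumes "finite V" "lowR V v" "Lv V v = Rv V v"
  shows "upR V v"
proof -
  have "card {w\<in>V. v<w \<and> 2*v-w\<in>V} = card {u\<in>V. v<u}"
    using lowR_cnt[OF assms(2)] assms(3) cnt_up[of V v] unfolding Rv_def by simp
  then have "{w\<in>V. v<w \<and> 2*v-w\<in>V} = {u\<in>V. v<u}" using assms(1)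
    by (intro card_subset_eq) auto
  then show ?thesis unfolding upR_def by blast
qed

lemma upR_lowR:
  assumes "finite V" "upR V v" "Lv V v = Rv V v"
  shows "lowR V v"
proof -
  have "card {u\<in>V. u<v \<and> 2*v-u\<in>V} = card {u\<in>V. u<v}"
    using upR_cnt[OF assms(2)] assms(3) unfolding Lv_def cnt_def by simp
  then have "{u\<in>V. u<v \<and> 2*v-u\<in>V} = {u\<in>V. u<v}" using assms(1)
    by (intro card_subset_eq) auto
  then show ?thesis unfolding lowR_def by blast
qed

lemma good_low: "finite V \<Longrightarrow> good V \<Longrightarrow> v \<in> V \<Longrightarrow> Lv V v < Rv V v \<Longrightarrow> lowR V v"
  unfolding good_def using upR_le by fastforce

lemma good_up: "finite V \<Longrightarrow> good V \<Longrightarrow> v \<in> V \<Longrightarrow> Rv V v < Lv V v \<Longrightarrow> upR V v"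
  unfolding good_def using lowR_le by fastforce

lemma between_none:
  assumes "finite V" "u \<in> V" "v \<in> V" "x \<in> V" "Lv V v = Suc (Lv V u)" "u < x" "x < v"
  shows False
  using Lv_mono[OF assms(1,2,6)] Lv_mono[OF assms(1,4,7)] assms(5) by simp

lemma odd_case:
  assumes fin: "finite V" and card: "card V = 2*k+1" and k: "k \<ge> 1" and g: "good V"
  shows "\<exists>a b c m c' m'. a \<noteq> 0 \<and> (\<lambda>x. a*x+b) ` V = cs c m \<union> cs c' m' \<and> even c \<and> odd c' \<and>
     of_int c + real m = of_int c' + real m'"
proof -
  obtain c where c: "c \<in> V" "Lv V c = k" using rank_exists[OF fin, of k] card by auto
  obtain d where d: "d \<in> V" "Lv V d = Suc k" using rank_exists[OF fin, of "Suc k"] card k by auto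
  have Rc: "Rv V c = k" using Rv_eq[OF fin c(1)] c card by simp
  have Rd: "Rv V d = k - 1" using Rv_eq[OF fin d(1)] d card by simp
  have cd: "c < d" using Lv_less_iff[OF fin c(1) d(1)] c d by simp
  have lc: "lowR V c" and uc: "upR V c"
  proof -
    have "lowR V c \<or> upR V c" using g c unfolding good_def by auto
    then show "lowR V c" "upR V c" using lowR_upR[OF fin] upR_lowR[OF fin] c Rc by auto
  qed
  have ud: "upR V d" using good_up[OF fin g d(1)] d Rd by simp
  obtain p q where pq: "(\<lambda>x. (x-c)/(d-c)) ` V = cs (-(2*int p)) (2*p) \<union> cs (-(2*int q+1)) (2*q+1)"
  proof -
    have "\<exists>p q. (\<lambda>x. (x-c)/(d-c)) ` V = cs (-(2*int p)) (2*p) \<union> cs (-(2*int q+1)) (2*q+1)"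
    proof (rule shapeR[OF fin c(1)])
      show "d - c > 0" using cd by simp
      show "c + (d - c) \<in> V" using d by simp
      show "2*c - x \<in> V" if "x \<in> V" for x
        using lc uc that unfolding lowR_def upR_def by (cases x c rule: linorder_cases) auto
      show "\<not> (c < x \<and> x < c + (d - c))" if "x \<in> V" for x
        using between_none[OF fin c(1) d(1) that] c d by auto
      show "2*(c + (d - c)) - x \<in> V" if "x \<in> V" "x > c + (d - c)" for x
        using ud that unfolding upR_def by simp
    qed
    then show ?thesis using that by blast
  qed
  have fe: "(\<lambda>x. (x-c)/(d-c)) = (\<lambda>x. (1/(d-c))*x + (-c/(d-c)))"
    by (rule ext) (simp add: diff_divide_distrib)
  show ?thesis
    apply (rule exI[of _ "1/(d-c)"], rule exI[of _ "-c/(d-c)"])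
    apply (rule exI[of _ "-(2*int p)"], rule exI[of _ "2*p"])
    apply (rule exI[of _ "-(2*int q+1)"], rule exI[of _ "2*q+1"])
    using pq cd unfolding fe by simp
qed

lemma even_finish:
  assumes "2 - y \<in> cs (-(2*int p)) (2*p) \<union> cs (-(2*int q+1)) (2*q+1)"
    and "\<And>z. z \<in> cs (-(2*int p)) (2*p) \<union> cs (-(2*int q+1)) (2*q+1) \<Longrightarrow> z < y"
  shows "y = 2*real p + 2 \<or> y = 2*real q + 3"
proof -
  have "real_of_int (2*int p) \<in> cs (-(2*int p)) (2*p)" unfolding mem_csE by (intro exI[of _ "2*int p"]) auto
  then have yp: "2*real p < y" using assms(2) by force
  have "real_of_int (2*int q+1) \<in> cs (-(2*int q+1)) (2*q+1)" unfolding mem_csO by (intro exI[of _ "2*int q+1"]) auto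
  then have yq: "2*real q + 1 < y" using assms(2) by force
  from assms(1) show ?thesis
    unfolding Un_iff mem_csE mem_csO
  proof (elim disjE exE conjE)
    fix j assume j: "2 - y = of_int j" "even j" "\<bar>j\<bar> \<le> 2*int p"
    have "j < 2 - 2*int p" using yp j(1) by linarith
    then have "j = -2*int p" using j by presburger
    then show ?thesis using j(1) by simp
  next
    fix j assume j: "2 - y = of_int j" "odd j" "\<bar>j\<bar> \<le> 2*int q+1"
    have "j < 1 - 2*int q" using yq j(1) by linarith
    then have "j = -2*int q - 1" using j by presburger
    then show ?thesis using j(1) by simp
  qed
qed

lemma even_case:
  assumes fin: "finite V" and card: "card V = 2*k" and k: "k \<ge> 2" and g: "good V"
    and v1: "v1 \<in> V" "Lv V v1 = k - 1"
    and mn: "mn \<in> V" "Lv V mn = 0"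
    and mx: "mx \<in> V" "Lv V mx = 2*k - 1"
    and ne: "2*v1 - mn \<noteq> mx"
  shows "\<exists>a b c m c' m'. a \<noteq> 0 \<and> (\<lambda>x. a*x+b) ` V = cs c m \<union> cs c' m' \<and> even c \<and> odd c' \<and>
     \<bar>of_int c + real m - (of_int c' + real m')\<bar> = 1"
proof -
  obtain v2 where v2: "v2 \<in> V" "Lv V v2 = k" using rank_exists[OF fin, of k] card k by auto
  have R1: "Rv V v1 = k" using Rv_eq[OF fin v1(1)] v1 card k by simp
  have R2: "Rv V v2 = k - 1" using Rv_eq[OF fin v2(1)] v2 card by simp
  have v12: "v1 < v2" using Lv_less_iff[OF fin v1(1) v2(1)] v1 v2 k by simp
  have mnv1: "mn < v1" using Lv_less_iff[OF fin mn(1) v1(1)] v1 mn k by simp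
  have "k < 2*k - 1" using k by simp
  then have v2mx: "v2 < mx" using Lv_less_iff[OF fin v2(1) mx(1)] v2 mx by simp
  have mn_le: "mn \<le> x" if "x \<in> V" for x
    using Lv_less_iff[OF fin that mn(1)] mn by (metis not_less0 not_less)
  have mx_ge: "x \<le> mx" if "x \<in> V" for x
  proof (rule ccontr)
    assume "\<not> x \<le> mx"
    then have "Lv V mx < Lv V x" using Lv_less_iff[OF fin mx(1) that] by simp
    then show False using Lv_less[OF fin that] mx card by simp
  qed
  have l1: "lowR V v1" using good_low[OF fin g v1(1)] v1 R1 k by simp
  have u2: "upR V v2" using good_up[OF fin g v2(1)] v2 R2 k by simp
  define W where "W = V - {mx}"
  have finW: "finite W" unfolding W_def using fin by simp
  define lower where "lower = {u\<in>V. u<v1}"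
  define upper where "upper = {w\<in>V. v1<w} - {mx}"
  have img_sub: "(\<lambda>u. 2*v1-u) ` lower \<subseteq> upper"
  proof
    fix w assume "w \<in> (\<lambda>u. 2*v1-u) ` lower"
    then obtain u where u: "u \<in> V" "u < v1" "w = 2*v1-u" unfolding lower_def by auto
    have wV: "w \<in> V" using l1 u unfolding lowR_def by auto
    have "w \<noteq> mx"
    proof
      assume "w = mx"
      have "2*v1 - mn \<in> V" using l1 mn(1) mnv1 unfolding lowR_def by auto
      then have "2*v1 - mn \<le> mx" using mx_ge by simp
      moreover have "2*v1 - mn \<ge> mx" using mn_le[OF u(1)] \<open>w = mx\<close> u(3) by simp
      ultimately show False using ne by simp
    qed
    then show "w \<in> upper" unfolding upper_def using wV u by auto
  qed
  have img_eq: "(\<lambda>u. 2*v1-u) ` lower = upper"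
  proof (rule card_subset_eq)
    show "finite upper" unfolding upper_def using fin by simp
    show "(\<lambda>u. 2*v1-u) ` lower \<subseteq> upper" by (rule img_sub)
    have "inj_on (\<lambda>u. 2*v1-u) lower" by (rule inj_onI) simp
    then have "card ((\<lambda>u. 2*v1-u) ` lower) = k - 1" using card_image v1(2) unfolding Lv_def lower_def by metis
    moreover have "card upper = k - 1"
    proof -
      have "mx \<in> {w\<in>V. v1<w}" using mx(1) v12 v2mx by simp
      then have "card upper = card {w\<in>V. v1<w} - 1" unfolding upper_def using fin by simp
      then show ?thesis using R1 unfolding Rv_def by simp
    qed
    ultimately show "card ((\<lambda>u. 2*v1-u) ` lower) = card upper" by simp
  qed
  have symW: "2*v1 - x \<in> W" if "x \<in> W" for x
  proof (cases x v1 rule: linorder_cases)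
    case less
    then have "2*v1 - x \<in> upper" using img_eq that unfolding lower_def W_def by blast
    then show ?thesis unfolding upper_def W_def by auto
  next
    case equal
    then show ?thesis using that by simp
  next
    case greater
    then have "x \<in> upper" using that unfolding upper_def W_def by auto
    then obtain u where u: "u \<in> lower" "x = 2*v1-u" using img_eq by (metis imageE)
    then have "2*v1 - x = u" by simp
    moreover have "u \<in> V" "u \<noteq> mx" using u v12 v2mx unfolding lower_def by auto
    ultimately show ?thesis unfolding W_def by simp
  qed
  obtain p q where pq: "(\<lambda>x. (x-v1)/(v2-v1)) ` W = cs (-(2*int p)) (2*p) \<union> cs (-(2*int q+1)) (2*q+1)"
  proof -
    have "\<exists>p q. (\<lambda>x. (x-v1)/(v2-v1)) ` W = cs (-(2*int p)) (2*p) \<union> cs (-(2*int q+1)) (2*q+1)"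
    proof (rule shapeR[OF finW])
      show "v1 \<in> W" unfolding W_def using v1 v12 v2mx by auto
      show "v2 - v1 > 0" using v12 by simp
      show "v1 + (v2 - v1) \<in> W" unfolding W_def using v2 v2mx by auto
      show "2*v1 - x \<in> W" if "x \<in> W" for x using symW that .
      show "\<not> (v1 < x \<and> x < v1 + (v2 - v1))" if "x \<in> W" for x
        using between_none[OF fin v1(1) v2(1), of x] that v1 v2 k unfolding W_def by auto
      show "2*(v1 + (v2 - v1)) - x \<in> W" if "x \<in> W" "x > v1 + (v2 - v1)" for x
        using u2 that v2mx unfolding upR_def W_def by auto
    qed
    then show ?thesis using that by blast
  qed
  define gg where "gg = (\<lambda>x. (x-v1)/(v2-v1))"
  define U where "U = cs (-(2*int p)) (2*p) \<union> cs (-(2*int q+1)) (2*q+1)"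
  have pq': "gg ` W = U" using pq unfolding gg_def U_def .
  have VW: "V = insert mx W" unfolding W_def using mx by auto
  have gV: "gg ` V = insert (gg mx) U" using pq' VW by simp
  have y1: "2 - gg mx \<in> U"
  proof -
    have "2*v2 - mx \<in> W" using u2 v2mx mx(1) unfolding upR_def W_def by auto
    moreover have "gg (2*v2 - mx) = 2 - gg mx" unfolding gg_def using v12 by (simp add: field_simps)
    ultimately show ?thesis using pq' by (metis image_eqI)
  qed
  have y2: "z < gg mx" if zU: "z \<in> U" for z
  proof -
    obtain x where x: "x \<in> W" "z = gg x" using zU pq' by auto
    have "x < mx" using x mx_ge unfolding W_def by force
    then show ?thesis unfolding x gg_def using v12 by (simp add: divide_strict_right_mono)
  qed
  have fe: "gg = (\<lambda>x. (1/(v2-v1))*x + (-v1/(v2-v1)))"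
    unfolding gg_def by (rule ext) (simp add: diff_divide_distrib)
  have a0: "1/(v2-v1) \<noteq> 0" using v12 by simp
  from even_finish[OF y1[unfolded U_def] y2[unfolded U_def]] show ?thesis
  proof
    assume "gg mx = 2*real p + 2"
    then have "gg ` V = cs (-(2*int p)) (Suc (2*p)) \<union> cs (-(2*int q+1)) (2*q+1)"
      unfolding gV U_def cs_Suc by (simp add: algebra_simps)
    then show ?thesis unfolding fe using a0
      by (intro exI[of _ "1/(v2-v1)"] exI[of _ "-v1/(v2-v1)"] exI[of _ "-(2*int p)"] exI[of _ "Suc (2*p)"]
          exI[of _ "-(2*int q+1)"] exI[of _ "2*q+1"]) auto
  next
    assume "gg mx = 2*real q + 3"
    then have "gg ` V = cs (-(2*int p)) (2*p) \<union> cs (-(2*int q+1)) (Suc (2*q+1))"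
      unfolding gV U_def cs_Suc by (simp add: algebra_simps)
    then show ?thesis unfolding fe using a0
      by (intro exI[of _ "1/(v2-v1)"] exI[of _ "-v1/(v2-v1)"] exI[of _ "-(2*int p)"] exI[of _ "2*p"]
          exI[of _ "-(2*int q+1)"] exI[of _ "Suc (2*q+1)"]) auto
  qed
qed

lemma mk_struct:
  assumes a: "a \<noteq> 0" and im: "(\<lambda>x. a*x+b) ` V = cs c m \<union> cs c' m'" and ec: "even c" and oc: "odd c'"
    and bc: "if odd n then of_int c + real m = of_int c' + real m' else \<bar>of_int c + real m - (of_int c' + real m')\<bar> = 1"
  shows "\<exists>f E D. similarity f \<and> f ` V = E \<union> D \<and> E \<noteq> {} \<and> D \<noteq> {} \<and>
       consec_even E \<and> consec_odd D \<and>
       (if odd n then barycenter E = barycenter D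
        else \<bar>barycenter E - barycenter D\<bar> = 1)"
proof (intro exI conjI)
  show "similarity (\<lambda>x. a*x+b)" unfolding similarity_def using a by blast
  show "(\<lambda>x. a*x+b) ` V = cs c m \<union> cs c' m'" by (rule im)
  show "cs c m \<noteq> {}" "cs c' m' \<noteq> {}" by (rule cs_ne)+
  show "consec_even (cs c m)" unfolding consec_even_def cs_def using ec by blast
  show "consec_odd (cs c' m')" unfolding consec_odd_def cs_def using oc by blast
  show "if odd n then barycenter (cs c m) = barycenter (cs c' m')
        else \<bar>barycenter (cs c m) - barycenter (cs c' m')\<bar> = 1"
    using bc unfolding bary_cs .
qed

lemma Lv_neg:
  assumes "finite V" "v \<in> V"
  shows "Lv (uminus ` V) (-v) = Rv V v"
proof -
  have "{u\<in>uminus ` V. u < -v} = uminus ` {u\<in>V. v<u}" by auto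
  moreover have "inj_on uminus {u\<in>V. v<u}" by (rule inj_onI) simp
  ultimately show ?thesis unfolding Lv_def Rv_def by (simp add: card_image)
qed

theorem mainTheorem7:
  fixes V :: "real set" and n :: nat
  assumes "n \<ge> 3" and "finite V" and "card V = n"
  shows "optimal_AP 3 V \<longleftrightarrow>
    (\<exists>f E D. similarity f \<and> f ` V = E \<union> D \<and> E \<noteq> {} \<and> D \<noteq> {} \<and>
       consec_even E \<and> consec_odd D \<and>
       (if odd n then barycenter E = barycenter D
        else \<bar>barycenter E - barycenter D\<bar> = 1))"
proof -
  note fin = assms(2)
  have opt: "optimal_AP 3 V \<longleftrightarrow> good V" by (rule optimal_iff_good[OF fin])
  show ?thesis
  proof
    assume "optimal_AP 3 V"
    then have g: "good V" using opt by simp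
    show "\<exists>f E D. similarity f \<and> f ` V = E \<union> D \<and> E \<noteq> {} \<and> D \<noteq> {} \<and>
       consec_even E \<and> consec_odd D \<and>
       (if odd n then barycenter E = barycenter D
        else \<bar>barycenter E - barycenter D\<bar> = 1)"
    proof (cases "odd n")
      case True
      define k where "k = n div 2"
      have "n = 2*k+1" using True unfolding k_def by simp
      moreover have "k \<ge> 1" using assms(1) unfolding k_def by linarith
      ultimately have nk: "card V = 2*k+1" "k \<ge> 1" using assms(3) by simp_all
      obtain a b c m c' m' where o: "a \<noteq> 0" "(\<lambda>x. a*x+b) ` V = cs c m \<union> cs c' m'" "even c" "odd c'"
          "of_int c + real m = of_int c' + real m'"
        using odd_case[OF fin nk g] by (elim exE conjE) blast
      have "if odd n then of_int c + real m = of_int c' + real m' else \<bar>of_int c + real m - (of_int c' + real m')\<bar> = 1"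
        unfolding if_P[OF True] by (rule o(5))
      then show ?thesis by (rule mk_struct[OF o(1-4)])
    next
      case False
      define k where "k = n div 2"
      have "n = 2*k" "k \<ge> 2" using False assms(1) unfolding k_def by presburger+
      then have nk: "card V = 2*k" "k \<ge> 2" using assms(3) by simp_all
      have lt: "k - 1 < card V" "k < card V" "0 < card V" "2*k-1 < card V" using nk by simp_all
      obtain v1 where v1: "v1 \<in> V" "Lv V v1 = k - 1" using rank_exists[OF fin lt(1)] by blast
      obtain v2 where v2: "v2 \<in> V" "Lv V v2 = k" using rank_exists[OF fin lt(2)] by blast
      obtain mn where mn: "mn \<in> V" "Lv V mn = 0" using rank_exists[OF fin lt(3)] by blast
      obtain mx where mx: "mx \<in> V" "Lv V mx = 2*k-1" using rank_exists[OF fin lt(4)] by blast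
      have v12: "v1 < v2" using Lv_less_iff[OF fin v1(1) v2(1)] v1 v2 nk by simp
      have "\<exists>a b c m c' m'. a \<noteq> 0 \<and> (\<lambda>x. a*x+b) ` V = cs c m \<union> cs c' m' \<and> even c \<and> odd c' \<and>
          \<bar>of_int c + real m - (of_int c' + real m')\<bar> = 1"
      proof (cases "2*v1 - mn = mx")
        case False
        show ?thesis by (rule even_case[OF fin nk g v1 mn mx False])
      next
        case True
        define V' where "V' = uminus ` V"
        have fin': "finite V'" unfolding V'_def using fin by simp
        have "inj_on uminus V" by (rule inj_onI) simp
        then have card': "card V' = 2*k" unfolding V'_def using nk(1) card_image by metis
        have g': "good V'"
        proof -
          have "good ((\<lambda>x. (-1)*x+0) ` V)" by (rule good_affine[OF g]) simp
          moreover have "(\<lambda>x. (-1)*x+0) ` V = V'" unfolding V'_def by simp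
          ultimately show ?thesis by simp
        qed
        have R: "Rv V v = 2*k - 1 - Lv V v" if "v \<in> V" for v using Rv_eq[OF fin that] nk by simp
        have a1: "-v2 \<in> V'" "Lv V' (-v2) = k - 1" unfolding V'_def Lv_neg[OF fin v2(1)] R[OF v2(1)] v2(2)
          using v2(1) by simp_all
        have a2: "-mx \<in> V'" "Lv V' (-mx) = 0" unfolding V'_def Lv_neg[OF fin mx(1)] R[OF mx(1)] mx(2)
          using mx(1) by simp_all
        have a3: "-mn \<in> V'" "Lv V' (-mn) = 2*k-1" unfolding V'_def Lv_neg[OF fin mn(1)] R[OF mn(1)] mn(2)
          using mn(1) by simp_all
        have ne: "2*(-v2) - (-mx) \<noteq> -mn" using True v12 by linarith
        obtain a b c m c' m' where r: "a \<noteq> 0" "(\<lambda>x. a*x+b) ` V' = cs c m \<union> cs c' m'" "even c" "odd c'"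
          "\<bar>of_int c + real m - (of_int c' + real m')\<bar> = 1"
          using even_case[OF fin' card' nk(2) g' a1 a2 a3 ne] by (elim exE conjE) blast
        have "(\<lambda>x. (-a)*x+b) ` V = (\<lambda>x. a*x+b) ` V'" unfolding V'_def image_image by simp
        from this r(2) have im: "(\<lambda>x. (-a)*x+b) ` V = cs c m \<union> cs c' m'" by (rule trans)
        have "-a \<noteq> 0" using r(1) by simp
        have all: "-a \<noteq> 0 \<and> (\<lambda>x. (-a)*x+b) ` V = cs c m \<union> cs c' m' \<and> even c \<and> odd c' \<and>
          \<bar>of_int c + real m - (of_int c' + real m')\<bar> = 1"
          using \<open>-a \<noteq> 0\<close> im r(3-5) by blast
        show ?thesis by (rule exI[of _ "-a"], rule exI[of _ b], rule exI[of _ c], rule exI[of _ m],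
           rule exI[of _ c'], rule exI[of _ m'], rule all)
      qed
      then obtain a b c m c' m' where o: "a \<noteq> 0" "(\<lambda>x. a*x+b) ` V = cs c m \<union> cs c' m'" "even c" "odd c'"
          "\<bar>of_int c + real m - (of_int c' + real m')\<bar> = 1" by (elim exE conjE) blast
      have "if odd n then of_int c + real m = of_int c' + real m' else \<bar>of_int c + real m - (of_int c' + real m')\<bar> = 1"
        unfolding if_not_P[OF False] by (rule o(5))
      then show ?thesis by (rule mk_struct[OF o(1-4)])
    qed
  next
    assume "\<exists>f E D. similarity f \<and> f ` V = E \<union> D \<and> E \<noteq> {} \<and> D \<noteq> {} \<and>
       consec_even E \<and> consec_odd D \<and>
       (if odd n then barycenter E = barycenter D
        else \<bar>barycenter E - barycenter D\<bar> = 1)"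
    then obtain f E D where h: "similarity f" "f ` V = E \<union> D" "consec_even E" "consec_odd D"
       "if odd n then barycenter E = barycenter D else \<bar>barycenter E - barycenter D\<bar> = 1" by blast
    obtain c m where cm: "E = cs c m" using h(3) unfolding consec_even_def cs_def by blast
    obtain c' m' where cm': "D = cs c' m'" using h(4) unfolding consec_odd_def cs_def by blast
    have "\<bar>barycenter E - barycenter D\<bar> \<le> 1" using h(5) by (auto split: if_splits)
    then have "\<bar>(of_int c + real m) - (of_int c' + real m')\<bar> \<le> (1::real)" unfolding cm cm' bary_cs .
    then have "good (f ` V)" unfolding h(2) cm cm' by (rule good_struct)
    then have "good V" using good_sim_iff[OF h(1)] by simp
    then show "optimal_AP 3 V" using opt by simp
  qed
qed

end
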